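(* For every $f\in\mathbf{Stp}$, the sets $$U^\Pi_f=\{h\in\mathbb N^{\mathbb N}: h^{[1]}\in[\![h^{[2]}]\!]^\Pi_f\},\qquad U^\Sigma_f=\{h\in\mathbb N^{\mathbb N}: h^{[1]}\in[\![h^{[2]}]\!]^\Sigma_f\}$$ satisfy $U^\Pi_f\in\Pi(\Sigma_{\alpha[f]}\mathcal A)$ and $U^\Sigma_f\in\Sigma(\Pi_{\alpha[f]}\mathcal A)$.
   Context: $\mathbb N=\{1,2,\dots\}$. $B^m_n=\{f\in\mathbb N^{\mathbb N}: f(n)=m\}$. $\mathcal A$ is the family of finite unions of finite intersections of sets of the form $B^m_n$ or $\mathbb N^{\mathbb N}\setminus B^m_n$. $\Pi(\mathcal X)$ (resp. $\Sigma(\mathcal X)$) denotes the family of countable intersections (resp. unions) of members of $\mathcal X$. Transfinitely: $\Pi_0\mathcal A=\Sigma_0\mathcal A=\mathcal A$, $\Pi_{\alpha+1}\mathcal A=\Pi(\Sigma_\alpha\mathcal A)$, $\Sigma_{\alpha+1}\mathcal A=\Sigma(\Pi_\alpha\mathcal A)$, and at limits $\lambda$ the unions over $\alpha<\lambda$. Fix any bijection $\langle\cdot,\cdot\rangle:\mathbb N\times\mathbb N\to\mathbb N\setminus\{1\}$, and put $\langle\,\rangle=1$, $\langle a_1\cdots a_n\rangle=\langle a_1,\langle a_2\cdots a_n\rangle\rangle$ (a bijection from finite tuples onto $\mathbb N$). For $k\in\mathbb N$: $[\![k]\!]^{\mathcal S'}=\mathbb N^{\mathbb N}\setminus B^m_n$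 if $k=\langle1mn\rangle$, $=B^m_n$ if $k=\langle2mn\rangle$, $=\emptyset$ otherwise; for $k=\langle a_1\cdots a_K\rangle$, $[\![k]\!]^{\mathcal S'_\cap}=\bigcap_{i\le K}[\![a_i]\!]^{\mathcal S'}$ (empty intersection $\mathbb N^{\mathbb N}$) and $[\![k]\!]^{\mathcal A}=\bigcup_{i\le K}[\![a_i]\!]^{\mathcal S'_\cap}$ (empty union $\emptyset$). $f^{[n]}(m)=f(\langle n,m\rangle)$. Stumps $\mathbf{Stp}\subseteq\mathbb N^{\mathbb N}$: inductively, $f\in\mathbf{Stp}$ if $f(1)\ne1$, or if $f(1)=1$ and all $f^{[n]}\in\mathbf{Stp}$. Ordinal $\alpha[f]$: $0$ if $f(1)\neq1$, and $\sup_n(\alpha[f^{[n]}]+1)$ if $f(1)=1$. For $f\in\mathbf{Stp}$, $g\in\mathbb N^{\mathbb N}$: if $f(1)\ne1$, $[\![g]\!]^\Pi_f=\bigcap_{n\ge2}[\![g(n)]\!]^{\mathcal A}$, $[\![g]\!]^\Sigma_f=\bigcup_{n\ge2}[\![g(n)]\!]^{\mathcal A}$; if $f(1)=1$, $[\![g]\!]^\Pi_f=\bigcap_n[\![g^{[n]}]\!]^\Sigma_{f^{[n]}}$, $[\![g]\!]^\Sigma_f=\bigcup_n[\![g^{[n]}]\!]^\Pi_{f^{[n]}}$. *)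

theory Defs
  imports Main
begin

(* Baire space N^N with N = {1,2,...}: functions nat => nat, canonically
   normalised by h 0 = 0 (argument 0 is not part of N), with positive values. *)
definition BS :: "(nat \<Rightarrow> nat) set" where
  "BS = {h. h 0 = 0 \<and> (\<forall>n\<ge>1. h n \<ge> 1)}"

definition Bset :: "nat \<Rightarrow> nat \<Rightarrow> (nat \<Rightarrow> nat) set" where
  "Bset m n = {h \<in> BS. h n = m}"

definition lits :: "(nat \<Rightarrow> nat) set set" where
  "lits = {Bset m n | m n. m \<ge> 1 \<and> n \<ge> 1} \<union> {BS - Bset m n | m n. m \<ge> 1 \<and> n \<ge> 1}"

definition Alg :: "(nat \<Rightarrow> nat) set set" where
  "Alg = {\<Union>F | F. finite F \<and> (\<forall>C\<in>F. \<exists>G. finite G \<and> G \<subseteq> lits \<and> C = BS \<inter> \<Inter>G)}"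

definition CountInter :: "(nat \<Rightarrow> nat) set set \<Rightarrow> (nat \<Rightarrow> nat) set set" where
  "CountInter X = {\<Inter>(range S) | S :: nat \<Rightarrow> (nat \<Rightarrow> nat) set. \<forall>i. S i \<in> X}"

definition CountUnion :: "(nat \<Rightarrow> nat) set set \<Rightarrow> (nat \<Rightarrow> nat) set set" where
  "CountUnion X = {\<Union>(range S) | S :: nat \<Rightarrow> (nat \<Rightarrow> nat) set. \<forall>i. S i \<in> X}"

(* countable (Brouwer) ordinal notations; BLim g denotes sup_n g n *)
datatype bord = BZero | BSuc bord | BLim "nat \<Rightarrow> bord"

primrec PiSig :: "bord \<Rightarrow> (nat \<Rightarrow> nat) set set \<times> (nat \<Rightarrow> nat) set set" where
  "PiSig BZero = (Alg, Alg)"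
| "PiSig (BSuc a) = (CountInter (snd (PiSig a)), CountUnion (fst (PiSig a)))"
| "PiSig (BLim g) = ((\<Union>n. fst (PiSig (g n))), (\<Union>n. snd (PiSig (g n))))"

definition PiA :: "bord \<Rightarrow> (nat \<Rightarrow> nat) set set" where "PiA a = fst (PiSig a)"
definition SigA :: "bord \<Rightarrow> (nat \<Rightarrow> nat) set set" where "SigA a = snd (PiSig a)"

definition pairing_bij :: "(nat \<Rightarrow> nat \<Rightarrow> nat) \<Rightarrow> bool" where
  "pairing_bij pr \<longleftrightarrow> bij_betw (\<lambda>(a, b). pr a b) ({1..} \<times> {1..}) {2..}"

primrec tup :: "(nat \<Rightarrow> nat \<Rightarrow> nat) \<Rightarrow> nat list \<Rightarrow> nat" where
  "tup pr [] = 1"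
| "tup pr (a # as) = pr a (tup pr as)"

definition decode :: "(nat \<Rightarrow> nat \<Rightarrow> nat) \<Rightarrow> nat \<Rightarrow> nat list" where
  "decode pr k = (THE as. set as \<subseteq> {1..} \<and> tup pr as = k)"

definition litS :: "(nat \<Rightarrow> nat \<Rightarrow> nat) \<Rightarrow> nat \<Rightarrow> (nat \<Rightarrow> nat) set" where
  "litS pr k = (case decode pr k of
       [a, m, n] \<Rightarrow> (if a = 1 then BS - Bset m n else if a = 2 then Bset m n else {})
     | _ \<Rightarrow> {})"

definition capS :: "(nat \<Rightarrow> nat \<Rightarrow> nat) \<Rightarrow> nat \<Rightarrow> (nat \<Rightarrow> nat) set" where
  "capS pr k = BS \<inter> (\<Inter>a\<in>set (decode pr k). litS pr a)"

definition algS :: "(nat \<Rightarrow> nat \<Rightarrow> nat) \<Rightarrow> nat \<Rightarrow> (nat \<Rightarrow> nat) set" where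
  "algS pr k = (\<Union>a\<in>set (decode pr k). capS pr a)"

definition sect :: "(nat \<Rightarrow> nat \<Rightarrow> nat) \<Rightarrow> (nat \<Rightarrow> nat) \<Rightarrow> nat \<Rightarrow> (nat \<Rightarrow> nat)" where
  "sect pr f n = (\<lambda>m. if m = 0 then 0 else f (pr n m))"

inductive Stp :: "(nat \<Rightarrow> nat \<Rightarrow> nat) \<Rightarrow> (nat \<Rightarrow> nat) \<Rightarrow> bool" for pr where
  "f \<in> BS \<Longrightarrow> f 1 \<noteq> 1 \<Longrightarrow> Stp pr f"
| "f \<in> BS \<Longrightarrow> f 1 = 1 \<Longrightarrow> (\<And>n. n \<ge> 1 \<Longrightarrow> Stp pr (sect pr f n)) \<Longrightarrow> Stp pr f"

(* graph of the ordinal alpha[f]: 0 if f(1) /= 1, sup_n (alpha[f^[n]] + 1) otherwise *)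
inductive stp_ord :: "(nat \<Rightarrow> nat \<Rightarrow> nat) \<Rightarrow> (nat \<Rightarrow> nat) \<Rightarrow> bord \<Rightarrow> bool" for pr where
  "f 1 \<noteq> 1 \<Longrightarrow> stp_ord pr f BZero"
| "f 1 = 1 \<Longrightarrow> (\<And>n. n \<ge> 1 \<Longrightarrow> stp_ord pr (sect pr f n) (g n))
     \<Longrightarrow> stp_ord pr f (BLim (\<lambda>n. BSuc (g (Suc n))))"

definition alpha :: "(nat \<Rightarrow> nat \<Rightarrow> nat) \<Rightarrow> (nat \<Rightarrow> nat) \<Rightarrow> bord" where
  "alpha pr f = (THE a. stp_ord pr f a)"

inductive interp :: "(nat \<Rightarrow> nat \<Rightarrow> nat) \<Rightarrow> (nat \<Rightarrow> nat) \<Rightarrow> (nat \<Rightarrow> nat)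
    \<Rightarrow> (nat \<Rightarrow> nat) set \<Rightarrow> (nat \<Rightarrow> nat) set \<Rightarrow> bool" for pr where
  "f 1 \<noteq> 1 \<Longrightarrow> interp pr f g (\<Inter>n\<in>{2..}. algS pr (g n)) (\<Union>n\<in>{2..}. algS pr (g n))"
| "f 1 = 1 \<Longrightarrow> (\<And>n. n \<ge> 1 \<Longrightarrow> interp pr (sect pr f n) (sect pr g n) (P n) (S n))
     \<Longrightarrow> interp pr f g (\<Inter>n\<in>{1..}. S n) (\<Union>n\<in>{1..}. P n)"

definition interpPi :: "(nat \<Rightarrow> nat \<Rightarrow> nat) \<Rightarrow> (nat \<Rightarrow> nat) \<Rightarrow> (nat \<Rightarrow> nat) \<Rightarrow> (nat \<Rightarrow> nat) set" where
  "interpPi pr f g = fst (THE p. interp pr f g (fst p) (snd p))"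

definition interpSig :: "(nat \<Rightarrow> nat \<Rightarrow> nat) \<Rightarrow> (nat \<Rightarrow> nat) \<Rightarrow> (nat \<Rightarrow> nat) \<Rightarrow> (nat \<Rightarrow> nat) set" where
  "interpSig pr f g = snd (THE p. interp pr f g (fst p) (snd p))"

definition UPi :: "(nat \<Rightarrow> nat \<Rightarrow> nat) \<Rightarrow> (nat \<Rightarrow> nat) \<Rightarrow> (nat \<Rightarrow> nat) set" where
  "UPi pr f = {h \<in> BS. sect pr h 1 \<in> interpPi pr f (sect pr h 2)}"

definition USig :: "(nat \<Rightarrow> nat \<Rightarrow> nat) \<Rightarrow> (nat \<Rightarrow> nat) \<Rightarrow> (nat \<Rightarrow> nat) set" where
  "USig pr f = {h \<in> BS. sect pr h 1 \<in> interpSig pr f (sect pr h 2)}"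

end

theory Submission
  imports Defs "HOL-Library.Nat_Bijection"
begin

lemma Alg_sub: "A \<in> Alg \<Longrightarrow> A \<subseteq> BS"
  unfolding Alg_def by blast

lemma Alg_empty: "{} \<in> Alg"
  unfolding Alg_def by (rule CollectI, rule exI[of _ "{}"]) auto

lemma Alg_BS: "BS \<in> Alg"
  unfolding Alg_def by (rule CollectI, rule exI[of _ "{BS}"]) (auto intro!: exI[of _ "{}"])

lemma Alg_Un: "A \<in> Alg \<Longrightarrow> B \<in> Alg \<Longrightarrow> A \<union> B \<in> Alg"
proof -
  assume "A \<in> Alg" "B \<in> Alg"
  then obtain F1 F2 where F1: "A = \<Union>F1" "finite F1" "\<forall>C\<in>F1. \<exists>G. finite G \<and> G \<subseteq> lits \<and> C = BS \<inter> \<Inter>G"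
    and F2: "B = \<Union>F2" "finite F2" "\<forall>C\<in>F2. \<exists>G. finite G \<and> G \<subseteq> lits \<and> C = BS \<inter> \<Inter>G"
    unfolding Alg_def by blast
  show ?thesis unfolding Alg_def
    by (rule CollectI, rule exI[of _ "F1 \<union> F2"]) (use F1 F2 in auto)
qed

lemma Alg_Int: "A \<in> Alg \<Longrightarrow> B \<in> Alg \<Longrightarrow> A \<inter> B \<in> Alg"
proof -
  assume "A \<in> Alg" "B \<in> Alg"
  then obtain F1 F2 where F1: "A = \<Union>F1" "finite F1" "\<forall>C\<in>F1. \<exists>G. finite G \<and> G \<subseteq> lits \<and> C = BS \<inter> \<Inter>G"
    and F2: "B = \<Union>F2" "finite F2" "\<forall>C\<in>F2. \<exists>G. finite G \<and> G \<subseteq> lits \<and> C = BS \<inter> \<Inter>G"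
    unfolding Alg_def by blast
  let ?F = "(\<lambda>(a,b). a \<inter> b) ` (F1 \<times> F2)"
  have "A \<inter> B = \<Union>?F" unfolding F1(1) F2(1) by auto
  moreover have "finite ?F" using F1(2) F2(2) by simp
  moreover have "\<forall>C\<in>?F. \<exists>G. finite G \<and> G \<subseteq> lits \<and> C = BS \<inter> \<Inter>G"
  proof
    fix C assume "C \<in> ?F"
    then obtain a b where ab: "a \<in> F1" "b \<in> F2" "C = a \<inter> b" by blast
    obtain G1 where G1: "finite G1" "G1 \<subseteq> lits" "a = BS \<inter> \<Inter>G1" using bspec[OF F1(3) ab(1)] by metis
    obtain G2 where G2: "finite G2" "G2 \<subseteq> lits" "b = BS \<inter> \<Inter>G2" using bspec[OF F2(3) ab(2)] by metis
    have "C = BS \<inter> \<Inter>(G1 \<union> G2)" using ab(3) G1(3) G2(3) by auto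
    moreover have "finite (G1 \<union> G2)" "G1 \<union> G2 \<subseteq> lits" using G1 G2 by auto
    ultimately show "\<exists>G. finite G \<and> G \<subseteq> lits \<and> C = BS \<inter> \<Inter>G" by (intro exI[of _ "G1 \<union> G2"]) simp
  qed
  ultimately show ?thesis unfolding Alg_def by (intro CollectI exI[of _ ?F]) simp
qed

lemma Alg_lit: "L \<in> lits \<Longrightarrow> BS \<inter> L \<in> Alg"
proof -
  assume L: "L \<in> lits"
  have "BS \<inter> L = \<Union>{BS \<inter> \<Inter>{L}}" by simp
  moreover have "\<forall>C\<in>{BS \<inter> \<Inter>{L}}. \<exists>G. finite G \<and> G \<subseteq> lits \<and> C = BS \<inter> \<Inter>G"
    using L by blast
  ultimately show ?thesis unfolding Alg_def by blast
qed

lemma Bset0: "n = Suc k \<Longrightarrow> Bset 0 n = {}"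
proof -
  assume n: "n = Suc k"
  have "h \<notin> Bset 0 n" for h
  proof
    assume "h \<in> Bset 0 n"
    then have "h n = 0" "\<forall>n\<ge>1. h n \<ge> 1" unfolding Bset_def BS_def by auto
    moreover have "1 \<le> n" using n by simp
    ultimately show False by auto
  qed
  then show ?thesis by blast
qed

lemma BS0: "h \<in> BS \<Longrightarrow> h 0 = 0" by (simp add: BS_def)

lemma Bset_n0: "Bset m 0 = (if m = 0 then BS else {})"
  unfolding Bset_def by (auto simp: BS0)

lemma Bset_Alg: "Bset m n \<in> Alg"
proof (cases "m \<ge> 1 \<and> n \<ge> 1")
  case True
  then have "Bset m n \<in> lits" unfolding lits_def by blast
  moreover have "BS \<inter> Bset m n = Bset m n" unfolding Bset_def by auto
  ultimately show ?thesis using Alg_lit by metis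
next
  case False
  then have "Bset m n = {} \<or> Bset m n = BS"
    unfolding de_Morgan_conj
  proof
    assume "\<not> 1 \<le> m"
    then have "m = 0" by simp
    show ?thesis
    proof (cases n)
      case (Suc k)
      have "Bset m n = {}" using Suc \<open>m = 0\<close> Bset0 by simp
      then show ?thesis by simp
    qed (simp add: Bset_n0 \<open>m = 0\<close>)
  next
    assume "\<not> 1 \<le> n"
    then have "n = 0" by simp
    then show ?thesis using Bset_n0 by simp
  qed
  then show ?thesis using Alg_empty Alg_BS by auto
qed

lemma coBset_Alg: "BS - Bset m n \<in> Alg"
proof (cases "m \<ge> 1 \<and> n \<ge> 1")
  case True
  then have "BS - Bset m n \<in> lits" unfolding lits_def by blast
  moreover have "BS \<inter> (BS - Bset m n) = BS - Bset m n" by auto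
  ultimately show ?thesis using Alg_lit by metis
next
  case False
  then have "Bset m n = {} \<or> Bset m n = BS"
    unfolding de_Morgan_conj
  proof
    assume "\<not> 1 \<le> m"
    then have "m = 0" by simp
    show ?thesis
    proof (cases n)
      case (Suc k)
      have "Bset m n = {}" using Suc \<open>m = 0\<close> Bset0 by simp
      then show ?thesis by simp
    qed (simp add: Bset_n0 \<open>m = 0\<close>)
  next
    assume "\<not> 1 \<le> n"
    then have "n = 0" by simp
    then show ?thesis using Bset_n0 by simp
  qed
  then show ?thesis using Alg_empty Alg_BS by auto
qed

lemma litS_Alg: "BS \<inter> litS pr k \<in> Alg"
proof -
  have "litS pr k = {} \<or> (\<exists>m n. litS pr k = BS - Bset m n) \<or> (\<exists>m n. litS pr k = Bset m n)"
    unfolding litS_def by (auto split: list.split)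
  moreover have "BS \<inter> Bset m n = Bset m n" for m n unfolding Bset_def by auto
  ultimately show ?thesis using Alg_empty Bset_Alg coBset_Alg
    by (metis Diff_subset Int_absorb1 inf_bot_right)
qed

lemma capS_Alg: "capS pr k \<in> Alg"
proof -
  have "BS \<inter> (\<Inter>a\<in>set xs. litS pr a) \<in> Alg" for xs
  proof (induction xs)
    case Nil then show ?case using Alg_BS by simp
  next
    case (Cons x xs)
    have "BS \<inter> (\<Inter>a\<in>set (x#xs). litS pr a) = (BS \<inter> litS pr x) \<inter> (BS \<inter> (\<Inter>a\<in>set xs. litS pr a))"
      by auto
    then show ?case using Cons Alg_Int litS_Alg by metis
  qed
  then show ?thesis unfolding capS_def by blast
qed

lemma algS_Alg: "algS pr k \<in> Alg"
proof -
  have "(\<Union>a\<in>set xs. capS pr a) \<in> Alg" for xs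
    by (induction xs) (auto simp: Alg_empty intro!: Alg_Un capS_Alg)
  then show ?thesis unfolding algS_def by blast
qed

definition good :: "(nat \<Rightarrow> nat) \<Rightarrow> bool" where
  "good s \<longleftrightarrow> s 0 = 0 \<and> (\<forall>k\<ge>1. s k \<ge> 1)"

lemma good_BS: "good s \<Longrightarrow> h \<in> BS \<Longrightarrow> h \<circ> s \<in> BS"
  unfolding good_def BS_def by auto

lemma Alg_finUn: "finite F \<Longrightarrow> \<forall>C\<in>F. C \<in> Alg \<Longrightarrow> \<Union>F \<in> Alg"
  by (induction F rule: finite_induct) (auto intro: Alg_Un Alg_empty)

lemma Alg_finInt: "finite G \<Longrightarrow> \<forall>L\<in>G. BS \<inter> L \<in> Alg \<Longrightarrow> BS \<inter> \<Inter>G \<in> Alg"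
proof (induction G rule: finite_induct)
  case empty then show ?case using Alg_BS by simp
next
  case (insert x F)
  have "BS \<inter> \<Inter>(insert x F) = (BS \<inter> x) \<inter> (BS \<inter> \<Inter>F)" by auto
  then show ?case using insert Alg_Int by auto
qed

lemma pre_Alg:
  assumes g: "good s" and A: "A \<in> Alg"
  shows "{h \<in> BS. h \<circ> s \<in> A} \<in> Alg"
proof -
  obtain F where F: "A = \<Union>F" "finite F" "\<forall>C\<in>F. \<exists>G. finite G \<and> G \<subseteq> lits \<and> C = BS \<inter> \<Inter>G"
    using A unfolding Alg_def by blast
  have lit: "{h \<in> BS. h \<circ> s \<in> L} \<in> Alg" if L: "L \<in> lits" for L
  proof -
    obtain m n where "L = Bset m n \<or> L = BS - Bset m n" using L unfolding lits_def by auto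
    moreover have "{h \<in> BS. h \<circ> s \<in> Bset m n} = Bset m (s n)"
      unfolding Bset_def using good_BS[OF g] by auto
    moreover have "{h \<in> BS. h \<circ> s \<in> BS - Bset m n} = BS - Bset m (s n)"
      unfolding Bset_def using good_BS[OF g] by auto
    ultimately show ?thesis using Bset_Alg coBset_Alg by auto
  qed
  have C: "{h \<in> BS. h \<circ> s \<in> C} \<in> Alg" if CF: "C \<in> F" for C
  proof -
    obtain G where G: "finite G" "G \<subseteq> lits" "C = BS \<inter> \<Inter>G" using bspec[OF F(3) CF] by metis
    have "{h \<in> BS. h \<circ> s \<in> C} = BS \<inter> \<Inter>((\<lambda>L. {h \<in> BS. h \<circ> s \<in> L}) ` G)"
      using G good_BS[OF g] by auto
    moreover have "BS \<inter> \<Inter>((\<lambda>L. {h \<in> BS. h \<circ> s \<in> L}) ` G) \<in> Alg"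
      apply (rule Alg_finInt) using G lit by (auto simp: Int_absorb1)
    ultimately show ?thesis by simp
  qed
  have "{h \<in> BS. h \<circ> s \<in> A} = \<Union>((\<lambda>C. {h \<in> BS. h \<circ> s \<in> C}) ` F)" using F by auto
  moreover have "\<Union>((\<lambda>C. {h \<in> BS. h \<circ> s \<in> C}) ` F) \<in> Alg"
    using F C by (auto intro!: Alg_finUn)
  ultimately show ?thesis by simp
qed

lemma CI_const: "A \<in> X \<Longrightarrow> A \<in> CountInter X"
  unfolding CountInter_def mem_Collect_eq by (intro exI[of _ "\<lambda>_. A"]) simp

lemma CU_const: "A \<in> X \<Longrightarrow> A \<in> CountUnion X"
  unfolding CountUnion_def mem_Collect_eq by (intro exI[of _ "\<lambda>_. A"]) simp

lemma CI_Inter: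
  fixes Y :: "nat \<Rightarrow> (nat \<Rightarrow> nat) set"
  assumes "\<And>i. Y i \<in> CountInter X"
  shows "\<Inter>(range Y) \<in> CountInter X"
proof -
  have "\<forall>i. \<exists>T::nat \<Rightarrow> _. Y i = \<Inter>(range T) \<and> (\<forall>j. T j \<in> X)"
  proof
    fix i show "\<exists>T::nat \<Rightarrow> _. Y i = \<Inter>(range T) \<and> (\<forall>j. T j \<in> X)"
      using assms[of i] unfolding CountInter_def mem_Collect_eq by simp
  qed
  from choice[OF this] obtain S :: "nat \<Rightarrow> nat \<Rightarrow> _" where S0: "\<forall>i. Y i = \<Inter>(range (S i)) \<and> (\<forall>j. S i j \<in> X)" ..
  then have S: "\<And>i. Y i = \<Inter>(range (S i))" "\<And>i j. S i j \<in> X" by simp_all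
  define T where "T j = (case prod_decode j of (a, b) \<Rightarrow> S a b)" for j
  have "\<Inter>(range Y) = \<Inter>(range T)"
  proof
    show "\<Inter>(range Y) \<subseteq> \<Inter>(range T)"
    proof
      fix x assume x: "x \<in> \<Inter>(range Y)"
      have "x \<in> T j" for j
      proof -
        obtain a b where ab: "prod_decode j = (a, b)" by (cases "prod_decode j")
        have "x \<in> Y a" using x by simp
        then have "x \<in> S a b" unfolding S by simp
        then show ?thesis unfolding T_def ab by simp
      qed
      then show "x \<in> \<Inter>(range T)" by simp
    qed
    show "\<Inter>(range T) \<subseteq> \<Inter>(range Y)"
    proof
      fix x assume x: "x \<in> \<Inter>(range T)"
      have "x \<in> S a b" for a b
      proof -
        have "x \<in> T (prod_encode (a,b))" using x by simp
        then show ?thesis unfolding T_def by (simp add: prod_encode_inverse)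
      qed
      then show "x \<in> \<Inter>(range Y)" unfolding S by simp
    qed
  qed
  moreover have "\<forall>j. T j \<in> X" unfolding T_def using S(2) by (simp split: prod.split)
  ultimately show ?thesis unfolding CountInter_def mem_Collect_eq by (intro exI[of _ T]) simp
qed

lemma CU_Union:
  fixes Y :: "nat \<Rightarrow> (nat \<Rightarrow> nat) set"
  assumes "\<And>i. Y i \<in> CountUnion X"
  shows "\<Union>(range Y) \<in> CountUnion X"
proof -
  have "\<forall>i. \<exists>T::nat \<Rightarrow> _. Y i = \<Union>(range T) \<and> (\<forall>j. T j \<in> X)"
  proof
    fix i show "\<exists>T::nat \<Rightarrow> _. Y i = \<Union>(range T) \<and> (\<forall>j. T j \<in> X)"
      using assms[of i] unfolding CountUnion_def mem_Collect_eq by simp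
  qed
  from choice[OF this] obtain S :: "nat \<Rightarrow> nat \<Rightarrow> _" where S0: "\<forall>i. Y i = \<Union>(range (S i)) \<and> (\<forall>j. S i j \<in> X)" ..
  then have S: "\<And>i. Y i = \<Union>(range (S i))" "\<And>i j. S i j \<in> X" by simp_all
  define T where "T j = (case prod_decode j of (a, b) \<Rightarrow> S a b)" for j
  have "\<Union>(range Y) = \<Union>(range T)"
  proof
    show "\<Union>(range T) \<subseteq> \<Union>(range Y)"
    proof
      fix x assume "x \<in> \<Union>(range T)"
      then obtain j where j: "x \<in> T j" by blast
      obtain a b where ab: "prod_decode j = (a, b)" by (cases "prod_decode j")
      have "x \<in> S a b" using j unfolding T_def ab by simp
      then show "x \<in> \<Union>(range Y)" unfolding S by blast
    qed
    show "\<Union>(range Y) \<subseteq> \<Union>(range T)"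
    proof
      fix x assume "x \<in> \<Union>(range Y)"
      then obtain a b where "x \<in> S a b" unfolding S by blast
      then have "x \<in> T (prod_encode (a,b))" unfolding T_def by (simp add: prod_encode_inverse)
      then show "x \<in> \<Union>(range T)" by blast
    qed
  qed
  moreover have "\<forall>j. T j \<in> X" unfolding T_def using S(2) by (simp split: prod.split)
  ultimately show ?thesis unfolding CountUnion_def mem_Collect_eq by (intro exI[of _ T]) simp
qed

lemma stp_ord_unique: "stp_ord pr f a \<Longrightarrow> stp_ord pr f b \<Longrightarrow> a = b"
proof (induction arbitrary: b rule: stp_ord.induct)
  case (1 f)
  then show ?case by (auto elim: stp_ord.cases)
next
  case (2 f g)
  from 2(4) show ?case
  proof (cases rule: stp_ord.cases)
    case 1 then show ?thesis using 2 by simp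
  next
    case (2 g')
    then show ?thesis using "2.IH" by auto
  qed
qed

lemma Stp_sect: "Stp pr f \<Longrightarrow> f 1 = 1 \<Longrightarrow> n \<ge> 1 \<Longrightarrow> Stp pr (sect pr f n)"
  by (auto elim: Stp.cases)

lemma stp_ord_exists: "Stp pr f \<Longrightarrow> \<exists>a. stp_ord pr f a"
proof (induction rule: Stp.induct)
  case (1 f) then show ?case using stp_ord.intros(1)[of f pr] by blast
next
  case (2 f)
  then have "\<forall>n. \<exists>a. n \<ge> 1 \<longrightarrow> stp_ord pr (sect pr f n) a" by auto
  then obtain g where g: "\<And>n. n \<ge> 1 \<Longrightarrow> stp_ord pr (sect pr f n) (g n)" by metis
  have "stp_ord pr f (BLim (\<lambda>n. BSuc (g (Suc n))))"
    by (rule stp_ord.intros(2)) (use 2(2) g in auto)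
  then show ?case by blast
qed

lemma alpha_eq: "stp_ord pr f a \<Longrightarrow> alpha pr f = a"
  unfolding alpha_def using stp_ord_unique by blast

lemma alpha_base: "f 1 \<noteq> 1 \<Longrightarrow> alpha pr f = BZero"
  by (rule alpha_eq) (auto intro: stp_ord.intros)

lemma alpha_step:
  assumes "Stp pr f" "f 1 = 1"
  shows "alpha pr f = BLim (\<lambda>n. BSuc (alpha pr (sect pr f (Suc n))))"
proof (rule alpha_eq)
  have "\<And>n. n \<ge> 1 \<Longrightarrow> stp_ord pr (sect pr f n) (alpha pr (sect pr f n))"
    using Stp_sect[OF assms] stp_ord_exists alpha_eq by metis
  then show "stp_ord pr f (BLim (\<lambda>n. BSuc (alpha pr (sect pr f (Suc n)))))"
    using stp_ord.intros(2)[of f pr "\<lambda>n. alpha pr (sect pr f n)"] assms(2) by blast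
qed

lemma interp_unique: "interp pr f g P S \<Longrightarrow> interp pr f g P' S' \<Longrightarrow> P = P' \<and> S = S'"
proof (induction arbitrary: P' S' rule: interp.induct)
  case (1 f g)
  then show ?case by (auto elim: interp.cases)
next
  case (2 f g P S)
  from 2(4) show ?case
  proof (cases rule: interp.cases)
    case 1 then show ?thesis using 2 by simp
  next
    case (2 P2 S2)
    then have "\<And>n. n \<ge> 1 \<Longrightarrow> P n = P2 n \<and> S n = S2 n" using "2.IH" by blast
    then show ?thesis using 2 by (auto simp: atLeast_def)
  qed
qed

lemma interp_exists: "Stp pr f \<Longrightarrow> \<exists>P S. interp pr f g P S"
proof (induction arbitrary: g rule: Stp.induct)
  case (1 f) then show ?case using interp.intros(1)[of f pr g] by blast
next
  case (2 f)
  then have "\<forall>n. \<exists>p. n \<ge> 1 \<longrightarrow> interp pr (sect pr f n) (sect pr g n) (fst p) (snd p)" by auto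
  then obtain p where "\<And>n. n \<ge> 1 \<Longrightarrow> interp pr (sect pr f n) (sect pr g n) (fst (p n)) (snd (p n))" by metis
  then show ?case using 2 interp.intros(2)[of f pr g "\<lambda>n. fst (p n)" "\<lambda>n. snd (p n)"] by blast
qed

lemma interp_eq: "interp pr f g P S \<Longrightarrow> interpPi pr f g = P \<and> interpSig pr f g = S"
proof -
  assume a: "interp pr f g P S"
  have "(THE p. interp pr f g (fst p) (snd p)) = (P, S)"
    by (rule the_equality) (simp add: a, metis a interp_unique prod.collapse)
  then show ?thesis unfolding interpPi_def interpSig_def by simp
qed

lemma interp_base:
  "f 1 \<noteq> 1 \<Longrightarrow> interpPi pr f g = (\<Inter>n\<in>{2..}. algS pr (g n)) \<and> interpSig pr f g = (\<Union>n\<in>{2..}. algS pr (g n))"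
  by (rule interp_eq) (auto intro: interp.intros)

lemma interp_step:
  assumes "Stp pr f" "f 1 = 1"
  shows "interpPi pr f g = (\<Inter>n\<in>{1..}. interpSig pr (sect pr f n) (sect pr g n))
       \<and> interpSig pr f g = (\<Union>n\<in>{1..}. interpPi pr (sect pr f n) (sect pr g n))"
proof (rule interp_eq, rule interp.intros(2)[of f pr g "\<lambda>n. interpPi pr (sect pr f n) (sect pr g n)" "\<lambda>n. interpSig pr (sect pr f n) (sect pr g n)", OF assms(2)])
  fix n :: nat assume "n \<ge> 1"
  then obtain P S where "interp pr (sect pr f n) (sect pr g n) P S"
    using interp_exists Stp_sect[OF assms] by blast
  then show "interp pr (sect pr f n) (sect pr g n) (interpPi pr (sect pr f n) (sect pr g n)) (interpSig pr (sect pr f n) (sect pr g n))"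
    using interp_eq by metis
qed

lemma SigA_BZero: "SigA BZero = Alg" and PiA_BZero: "PiA BZero = Alg"
  by (simp_all add: SigA_def PiA_def)

lemma SigA_BLim: "SigA (BLim G) = (\<Union>n. SigA (G n))" and PiA_BLim: "PiA (BLim G) = (\<Union>n. PiA (G n))"
  by (simp_all add: SigA_def PiA_def)

lemma SigA_BSuc: "SigA (BSuc a) = CountUnion (PiA a)" and PiA_BSuc: "PiA (BSuc a) = CountInter (SigA a)"
  by (simp_all add: SigA_def PiA_def)

lemma pr_pos: "pairing_bij pr \<Longrightarrow> a \<ge> 1 \<Longrightarrow> b \<ge> 1 \<Longrightarrow> pr a b \<ge> 1"
  unfolding pairing_bij_def using bij_betw_apply[of "\<lambda>(a, b). pr a b" "{1..} \<times> {1..}" "{2..}" "(a,b)"]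
  by auto

definition sh :: "(nat \<Rightarrow> nat \<Rightarrow> nat) \<Rightarrow> (nat \<Rightarrow> nat) \<Rightarrow> nat \<Rightarrow> nat \<Rightarrow> nat" where
  "sh pr r n = (\<lambda>m. if m = 0 then 0 else r (pr n m))"

lemma sh_good: "pairing_bij pr \<Longrightarrow> good r \<Longrightarrow> n \<ge> 1 \<Longrightarrow> good (sh pr r n)"
  unfolding good_def sh_def using pr_pos by auto

lemma sect_comp: "h \<in> BS \<Longrightarrow> sect pr (h \<circ> r) n = h \<circ> sh pr r n"
  unfolding sect_def sh_def BS_def by auto

lemma BS_pos: "h \<in> BS \<Longrightarrow> k \<ge> 1 \<Longrightarrow> h k \<ge> 1"
  unfolding BS_def by simp

lemma main_base:
  assumes f1: "f 1 \<noteq> 1" and gs: "good s" and gr: "good r"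
  shows "{h \<in> BS. h \<circ> s \<in> interpPi pr f (h \<circ> r)} \<in> CountInter Alg \<and>
     {h \<in> BS. h \<circ> s \<in> interpSig pr f (h \<circ> r)} \<in> CountUnion Alg"
proof -
  have pos: "Suc (h (r n) - 1) = h (r n)" if "h \<in> BS" "n \<ge> 2" for h n
  proof -
    have "r n \<ge> 1" using gr that(2) unfolding good_def by simp
    then have "h (r n) \<ge> 1" using BS_pos[OF that(1)] by simp
    then show ?thesis by simp
  qed
  have IP: "interpPi pr f g = (\<Inter>n\<in>{2..}. algS pr (g n))" for g using interp_base[where f=f and pr=pr and g=g, OF f1] by blast
  have IS: "interpSig pr f g = (\<Union>n\<in>{2..}. algS pr (g n))" for g using interp_base[where f=f and pr=pr and g=g, OF f1] by blast
  define Q where "Q n k = (BS - Bset (Suc k) (r n)) \<union> {h \<in> BS. h \<circ> s \<in> algS pr (Suc k)}" for n k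
  define R where "R n k = Bset (Suc k) (r n) \<inter> {h \<in> BS. h \<circ> s \<in> algS pr (Suc k)}" for n k
  have QA: "Q n k \<in> Alg" for n k unfolding Q_def by (intro Alg_Un coBset_Alg pre_Alg gs algS_Alg)
  have RA: "R n k \<in> Alg" for n k unfolding R_def by (intro Alg_Int Bset_Alg pre_Alg gs algS_Alg)
  have e1: "{h \<in> BS. h \<circ> s \<in> interpPi pr f (h \<circ> r)} = \<Inter>(range (\<lambda>i. \<Inter>(range (\<lambda>k. Q (i+2) k))))"
  proof (intro equalityI subsetI)
    fix h assume "h \<in> {h \<in> BS. h \<circ> s \<in> interpPi pr f (h \<circ> r)}"
    then have h1: "h \<in> BS" and h2: "\<And>n. n \<ge> 2 \<Longrightarrow> h \<circ> s \<in> algS pr (h (r n))"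
      unfolding IP by auto
    have "h \<in> Q (i+2) k" for i k
    proof (cases "h (r (i+2)) = Suc k")
      case True
      then have "h \<circ> s \<in> algS pr (Suc k)" using h2[of "i+2"] by simp
      then show ?thesis unfolding Q_def using h1 by simp
    next
      case False
      then have "h \<notin> Bset (Suc k) (r (i+2))" unfolding Bset_def by simp
      then show ?thesis unfolding Q_def using h1 by simp
    qed
    then show "h \<in> \<Inter>(range (\<lambda>i. \<Inter>(range (\<lambda>k. Q (i+2) k))))" by simp
  next
    fix h assume a: "h \<in> \<Inter>(range (\<lambda>i. \<Inter>(range (\<lambda>k. Q (i+2) k))))"
    have aQ: "h \<in> Q (i+2) k" for i k using a by simp
    then have hBS: "h \<in> BS" unfolding Q_def by blast
    have "h \<circ> s \<in> algS pr (h (r n))" if n2: "n \<ge> 2" for n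
    proof -
      have nn: "n - 2 + 2 = n" using n2 by simp
      have "h \<in> Q n (h (r n) - 1)" using aQ[of "n-2" "h (r n) - 1"] unfolding nn .
      moreover have "h \<in> Bset (Suc (h (r n) - 1)) (r n)" unfolding Bset_def pos[OF hBS n2] using hBS by simp
      ultimately have "h \<circ> s \<in> algS pr (Suc (h (r n) - 1))" unfolding Q_def by blast
      then show ?thesis unfolding pos[OF hBS n2] .
    qed
    then show "h \<in> {h \<in> BS. h \<circ> s \<in> interpPi pr f (h \<circ> r)}"
      unfolding IP using hBS by simp
  qed
  have e2: "{h \<in> BS. h \<circ> s \<in> interpSig pr f (h \<circ> r)} = \<Union>(range (\<lambda>i. \<Union>(range (\<lambda>k. R (i+2) k))))"
  proof (intro equalityI subsetI)
    fix h assume "h \<in> {h \<in> BS. h \<circ> s \<in> interpSig pr f (h \<circ> r)}"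
    then obtain n where h: "h \<in> BS" "n \<ge> 2" "h \<circ> s \<in> algS pr (h (r n))"
      unfolding IS by auto
    have nn: "n - 2 + 2 = n" using h(2) by simp
    have "h \<in> Bset (Suc (h (r n) - 1)) (r n)" unfolding Bset_def pos[OF h(1,2)] using h(1) by simp
    moreover have "h \<circ> s \<in> algS pr (Suc (h (r n) - 1))" unfolding pos[OF h(1,2)] by (rule h(3))
    ultimately have "h \<in> R n (h (r n) - 1)" unfolding R_def using h(1) by simp
    then have "h \<in> R ((n-2)+2) (h (r n) - 1)" unfolding nn .
    then show "h \<in> \<Union>(range (\<lambda>i. \<Union>(range (\<lambda>k. R (i+2) k))))" by blast
  next
    fix h assume "h \<in> \<Union>(range (\<lambda>i. \<Union>(range (\<lambda>k. R (i+2) k))))"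
    then obtain i k where "h \<in> R (i+2) k" by blast
    then have h: "h \<in> BS" "h (r (i+2)) = Suc k" "h \<circ> s \<in> algS pr (Suc k)"
      unfolding R_def Bset_def by auto
    have "h \<circ> s \<in> (\<Union>n\<in>{2..}. algS pr ((h \<circ> r) n))"
      using h(2,3) by (intro UN_I[of "i+2"]) simp_all
    then show "h \<in> {h \<in> BS. h \<circ> s \<in> interpSig pr f (h \<circ> r)}"
      unfolding IS using h(1) by simp
  qed
  have Y1: "\<Inter>(range (\<lambda>k. Q (i+2) k)) \<in> CountInter Alg" for i
    unfolding CountInter_def mem_Collect_eq by (intro exI[of _ "\<lambda>k. Q (i+2) k"]) (simp add: QA)
  have Y2: "\<Union>(range (\<lambda>k. R (i+2) k)) \<in> CountUnion Alg" for i
    unfolding CountUnion_def mem_Collect_eq by (intro exI[of _ "\<lambda>k. R (i+2) k"]) (simp add: RA)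
  have X1: "\<Inter>(range (\<lambda>i. \<Inter>(range (\<lambda>k. Q (i+2) k)))) \<in> CountInter Alg"
    by (rule CI_Inter, rule Y1)
  have X2: "\<Union>(range (\<lambda>i. \<Union>(range (\<lambda>k. R (i+2) k)))) \<in> CountUnion Alg"
    by (rule CU_Union, rule Y2)
  show ?thesis unfolding e1 e2 using X1 X2 by (rule conjI)
qed

lemma main_step:
  assumes pb: "pairing_bij pr" and stp: "Stp pr f" and f1: "f 1 = 1"
    and IH: "\<And>n s r. n \<ge> 1 \<Longrightarrow> good s \<Longrightarrow> good r \<Longrightarrow>
       {h \<in> BS. h \<circ> s \<in> interpPi pr (sect pr f n) (h \<circ> r)} \<in> CountInter (SigA (alpha pr (sect pr f n))) \<and>
       {h \<in> BS. h \<circ> s \<in> interpSig pr (sect pr f n) (h \<circ> r)} \<in> CountUnion (PiA (alpha pr (sect pr f n)))"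
    and gs: "good s" and gr: "good r"
  shows "{h \<in> BS. h \<circ> s \<in> interpPi pr f (h \<circ> r)} \<in> CountInter (SigA (alpha pr f)) \<and>
     {h \<in> BS. h \<circ> s \<in> interpSig pr f (h \<circ> r)} \<in> CountUnion (PiA (alpha pr f))"
proof -
  have IP: "interpPi pr f g = (\<Inter>n\<in>{1..}. interpSig pr (sect pr f n) (sect pr g n))" for g
    using interp_step[OF stp f1] by blast
  have IS: "interpSig pr f g = (\<Union>n\<in>{1..}. interpPi pr (sect pr f n) (sect pr g n))" for g
    using interp_step[OF stp f1] by blast
  have AL: "alpha pr f = BLim (\<lambda>n. BSuc (alpha pr (sect pr f (Suc n))))" by (rule alpha_step[OF stp f1])
  define T where "T i = {h \<in> BS. h \<circ> s \<in> interpSig pr (sect pr f (Suc i)) (h \<circ> sh pr r (Suc i))}" for i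
  define V where "V i = {h \<in> BS. h \<circ> s \<in> interpPi pr (sect pr f (Suc i)) (h \<circ> sh pr r (Suc i))}" for i
  have IH': "T i \<in> CountUnion (PiA (alpha pr (sect pr f (Suc i))))
          \<and> V i \<in> CountInter (SigA (alpha pr (sect pr f (Suc i))))" for i
    unfolding T_def V_def using IH[of "Suc i" s "sh pr r (Suc i)"] gs sh_good[OF pb gr, of "Suc i"] by simp
  have sc: "sect pr (h \<circ> r) n = h \<circ> sh pr r n" if "h \<in> BS" for h n using sect_comp[OF that] .
  have e1: "{h \<in> BS. h \<circ> s \<in> interpPi pr f (h \<circ> r)} = \<Inter>(range T)"
  proof (intro equalityI subsetI)
    fix h assume "h \<in> {h \<in> BS. h \<circ> s \<in> interpPi pr f (h \<circ> r)}"
    then have h: "h \<in> BS" "\<And>n. n \<ge> 1 \<Longrightarrow> h \<circ> s \<in> interpSig pr (sect pr f n) (sect pr (h \<circ> r) n)"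
      unfolding IP by auto
    have "h \<in> T i" for i unfolding T_def using h(1) h(2)[of "Suc i"] sc[OF h(1)] by simp
    then show "h \<in> \<Inter>(range T)" by simp
  next
    fix h assume a: "h \<in> \<Inter>(range T)"
    then have aT: "h \<in> T i" for i by simp
    then have hBS: "h \<in> BS" unfolding T_def by blast
    have "h \<circ> s \<in> interpSig pr (sect pr f n) (sect pr (h \<circ> r) n)" if n1: "n \<ge> 1" for n
    proof -
      have nn: "Suc (n - 1) = n" using n1 by simp
      have "h \<in> T (n - 1)" by (rule aT)
      then show ?thesis unfolding T_def nn sc[OF hBS] by simp
    qed
    then show "h \<in> {h \<in> BS. h \<circ> s \<in> interpPi pr f (h \<circ> r)}"
      unfolding IP using hBS by simp
  qed
  have e2: "{h \<in> BS. h \<circ> s \<in> interpSig pr f (h \<circ> r)} = \<Union>(range V)"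
  proof (intro equalityI subsetI)
    fix h assume "h \<in> {h \<in> BS. h \<circ> s \<in> interpSig pr f (h \<circ> r)}"
    then obtain n where h: "h \<in> BS" "n \<ge> 1" "h \<circ> s \<in> interpPi pr (sect pr f n) (sect pr (h \<circ> r) n)"
      unfolding IS by auto
    have nn: "Suc (n - 1) = n" using h(2) by simp
    have "h \<in> V (n - 1)" unfolding V_def nn using h(1,3) sc[OF h(1)] by simp
    then show "h \<in> \<Union>(range V)" by blast
  next
    fix h assume "h \<in> \<Union>(range V)"
    then obtain i where "h \<in> V i" by blast
    then have h: "h \<in> BS" "h \<circ> s \<in> interpPi pr (sect pr f (Suc i)) (sect pr (h \<circ> r) (Suc i))"
      unfolding V_def using sc by auto
    have "h \<circ> s \<in> (\<Union>n\<in>{1..}. interpPi pr (sect pr f n) (sect pr (h \<circ> r) n))"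
      using h(2) by (intro UN_I[of "Suc i"]) simp_all
    then show "h \<in> {h \<in> BS. h \<circ> s \<in> interpSig pr f (h \<circ> r)}"
      unfolding IS using h(1) by simp
  qed
  have "T i \<in> SigA (alpha pr f)" for i
    unfolding AL SigA_BLim SigA_BSuc using IH' by blast
  moreover have "V i \<in> PiA (alpha pr f)" for i
    unfolding AL PiA_BLim PiA_BSuc using IH' by blast
  ultimately show ?thesis unfolding e1 e2 CountInter_def CountUnion_def mem_Collect_eq
    by (intro conjI exI[of _ T] exI[of _ V]) simp_all
qed

lemma main:
  assumes pb: "pairing_bij pr"
  shows "Stp pr f \<Longrightarrow> \<forall>s r. good s \<longrightarrow> good r \<longrightarrow>
     {h \<in> BS. h \<circ> s \<in> interpPi pr f (h \<circ> r)} \<in> CountInter (SigA (alpha pr f)) \<and>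
     {h \<in> BS. h \<circ> s \<in> interpSig pr f (h \<circ> r)} \<in> CountUnion (PiA (alpha pr f))"
proof (induction rule: Stp.induct)
  case (1 f)
  then show ?case using main_base[of f] unfolding alpha_base[where f=f and pr=pr, OF 1(2)] SigA_BZero PiA_BZero by blast
next
  case (2 f)
  have stp: "Stp pr f" using 2 by (auto intro: Stp.intros)
  show ?case
  proof (intro allI impI)
    fix s r assume gs: "good s" and gr: "good r"
    show "{h \<in> BS. h \<circ> s \<in> interpPi pr f (h \<circ> r)} \<in> CountInter (SigA (alpha pr f)) \<and>
     {h \<in> BS. h \<circ> s \<in> interpSig pr f (h \<circ> r)} \<in> CountUnion (PiA (alpha pr f))"
    proof (rule main_step[OF pb stp 2(2) _ gs gr])
      fix n :: nat and s' r' assume "n \<ge> 1" "good s'" "good r'"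
      then show "{h \<in> BS. h \<circ> s' \<in> interpPi pr (sect pr f n) (h \<circ> r')} \<in> CountInter (SigA (alpha pr (sect pr f n))) \<and>
       {h \<in> BS. h \<circ> s' \<in> interpSig pr (sect pr f n) (h \<circ> r')} \<in> CountUnion (PiA (alpha pr (sect pr f n)))"
        using 2(4) by blast
    qed
  qed
qed

theorem lemma5p24:
  fixes pr :: "nat \<Rightarrow> nat \<Rightarrow> nat" and f :: "nat \<Rightarrow> nat"
  assumes "pairing_bij pr"
    and "Stp pr f"
  shows "UPi pr f \<in> CountInter (SigA (alpha pr f)) \<and> USig pr f \<in> CountUnion (PiA (alpha pr f))"
proof -
  have gid: "good id" unfolding good_def by simp
  have g1: "good (sh pr id 1)" and g2: "good (sh pr id 2)" using sh_good[OF assms(1) gid] by auto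
  have "sect pr h n = h \<circ> sh pr id n" if "h \<in> BS" for h n
    using sect_comp[OF that, of pr id n] by simp
  then have "UPi pr f = {h \<in> BS. h \<circ> sh pr id 1 \<in> interpPi pr f (h \<circ> sh pr id 2)}"
    and "USig pr f = {h \<in> BS. h \<circ> sh pr id 1 \<in> interpSig pr f (h \<circ> sh pr id 2)}"
    unfolding UPi_def USig_def by auto
  then show ?thesis using main[OF assms(1) assms(2)] g1 g2 by simp
qed

end
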